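(* Let $(\mathbf{x}, y, a)$ be jointly distributed according to a distribution $P$ with $\mathbf{x}\in\mathbb{R}^d$, $y\in\mathcal{Y}=\{1,\ldots,L\}$ and $a\in\mathcal{A}$, where $|\mathcal{A}|=K$, and assume every group has positive prior, $P(y,a)>0$ for all $(y,a)\in\mathcal{Y}\times\mathcal{A}$. For a scoring function $f:\mathbb{R}^d\to\mathbb{R}^L$ define its group-balanced accuracy $$GBA(f)=\frac{1}{KL}\sum_{(y_0,a_0)\in\mathcal{Y}\times\mathcal{A}} P\Big(y=\arg\max_{y'\in\mathcal{Y}} f_{y'}(\mathbf{x}) \,\Big|\, (y,a)=(y_0,a_0)\Big).$$ Then the classifier that assigns to each input $\mathbf{x}$ the prediction $$\arg\max_{y\in\mathcal{Y}}\sum_{a\in\mathcal{A}}\frac{P(y,a\mid\mathbf{x})}{P(y,a)} \;=\; \arg\max_{y\in\mathcal{Y}}\sum_{a\in\mathcal{A}}\frac{P(y\mid a,\mathbf{x})\,P(a\mid\mathbf{x})}{P(y,a)}$$ maximizes $GBA$; i.e. any $f^\ast$ with $\arg\max_{y}f^\ast_y(\mathbf{x})$ equal to this prediction for every $\mathbf{x}$ satisfies $f^\ast\in\arg\max_f GBA(f)$.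
   Context: $\mathcal{A}$ is the set of values of a (spurious) attribute; a group is a pair $g=(y,a)\in\mathcal{Y}\times\mathcal{A}$. $P(y,a)$ denotes the prior probability of group $(y,a)$ and $P(y,a\mid\mathbf{x})$ the true posterior probability of group $(y,a)$ given $\mathbf{x}$; $P(y\mid a,\mathbf{x})$ and $P(a\mid\mathbf{x})$ are the corresponding conditional probabilities under $P$. *)

theory Defs
  imports "HOL-Probability.Probability"
begin

text \<open>Samples are triples (x, (y, a)) with x :: real^'d, label y :: 'y, attribute a :: 'a.
  A scoring function is f :: real^'d => 'y => real (f x y = f_y(x)).\<close>

text \<open>Prediction argmax_y f_y(x); ties are broken by a fixed (choice-based) rule that
  depends only on the set of maximisers.\<close>
definition pred :: "('x \<Rightarrow> 'y \<Rightarrow> real) \<Rightarrow> 'x \<Rightarrow> 'y" where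
  "pred f x = (SOME y. \<forall>y'. f x y' \<le> f x y)"

definition cond_prob :: "'z measure \<Rightarrow> 'z set \<Rightarrow> 'z set \<Rightarrow> real" where
  "cond_prob M A B = measure M (A \<inter> B) / measure M B"

definition group_prior :: "('x \<times> ('y \<times> 'a)) measure \<Rightarrow> 'y \<Rightarrow> 'a \<Rightarrow> real" where
  "group_prior M y a = measure M {z \<in> space M. snd z = (y, a)}"

definition GBA :: "('x \<times> ('y::finite \<times> 'a::finite)) measure \<Rightarrow> ('x \<Rightarrow> 'y \<Rightarrow> real) \<Rightarrow> real" where
  "GBA M f = (1 / (real CARD('a) * real CARD('y))) *
     (\<Sum>(y0, a0) \<in> (UNIV :: ('y \<times> 'a) set).
        cond_prob M {z \<in> space M. pred f (fst z) = fst (snd z)}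
                    {z \<in> space M. snd z = (y0, a0)})"

text \<open>The score sum_a P(y,a|x)/P(y,a), given the posterior eta x y a = P(y,a|x).\<close>
definition bayes_score :: "('x \<times> ('y \<times> 'a::finite)) measure \<Rightarrow> ('x \<Rightarrow> 'y \<Rightarrow> 'a \<Rightarrow> real)
    \<Rightarrow> 'x \<Rightarrow> 'y \<Rightarrow> real" where
  "bayes_score M \<eta> x y = (\<Sum>a\<in>UNIV. \<eta> x y a / group_prior M y a)"

end

theory Submission
  imports Defs
begin
lemma pred_meas:
  fixes f :: "'x \<Rightarrow> 'y::finite \<Rightarrow> real"
  assumes "\<forall>y. (\<lambda>x. f x y) \<in> borel_measurable N"
  shows "{x\<in>space N. pred f x = y0} \<in> sets N"
proof -
  have eq: "{x\<in>space N. pred f x = y0} = (\<Union>T\<in>{T. (SOME y. y\<in>T) = y0}.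
     {x\<in>space N. \<forall>y\<in>UNIV. (\<forall>y'\<in>UNIV. f x y' \<le> f x y) = (y \<in> T)})"
  proof (intro equalityI subsetI)
    fix x assume "x \<in> {x\<in>space N. pred f x = y0}"
    then show "x \<in> (\<Union>T\<in>{T. (SOME y. y\<in>T) = y0}.
     {x\<in>space N. \<forall>y\<in>UNIV. (\<forall>y'\<in>UNIV. f x y' \<le> f x y) = (y \<in> T)})"
      by (auto simp: pred_def intro!: exI[of _ "{y. \<forall>y'. f x y' \<le> f x y}"])
  qed (auto simp: pred_def)
  have A: "Measurable.pred N (\<lambda>x. \<forall>y'\<in>UNIV. f x y' \<le> f x y)" for y
    by (rule pred_intros_finite(3)) (use assms in \<open>auto simp: Measurable.pred_def intro!: borel_measurable_le\<close>)
  have "Measurable.pred N (\<lambda>x. \<forall>y\<in>UNIV. (\<forall>y'\<in>UNIV. f x y' \<le> f x y) = (y \<in> T))" for T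
  proof (rule pred_intros_finite(3))
    fix y show "Measurable.pred N (\<lambda>x. (\<forall>y'\<in>UNIV. f x y' \<le> f x y) = (y \<in> T))"
      using A[of y] proof (cases "y \<in> T")
        case False
        then show ?thesis using pred_intros_logic(2)[OF A[of y]] by simp
      qed simp
  qed simp
  then have "{x\<in>space N. \<forall>y\<in>UNIV. (\<forall>y'\<in>UNIV. f x y' \<le> f x y) = (y \<in> T)} \<in> sets N" for T
    by (simp add: Measurable.pred_def)
  then show ?thesis unfolding eq by (intro sets.finite_UN) auto
qed

theorem proposition1:
  fixes M :: "((real ^ 'd) \<times> ('y::finite \<times> 'a::finite)) measure"
    and \<eta> :: "real ^ 'd \<Rightarrow> 'y \<Rightarrow> 'a \<Rightarrow> real"
    and fstar :: "real ^ 'd \<Rightarrow> 'y \<Rightarrow> real"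
  assumes "prob_space M"
    and "sets M = sets (borel \<Otimes>\<^sub>M count_space UNIV)"
    and "\<forall>y a. group_prior M y a > 0"
    and "\<forall>y a. (\<lambda>x. \<eta> x y a) \<in> borel_measurable borel"
    and "\<forall>x y a. \<eta> x y a \<ge> 0"
    and "\<forall>x. (\<Sum>(y, a)\<in>UNIV. \<eta> x y a) = 1"
    and "\<forall>y a. \<forall>B \<in> sets borel.
           measure M (B \<times> {(y, a)}) = (LINT x:B|distr M borel fst. \<eta> x y a)"
    and "\<forall>y. (\<lambda>x. fstar x y) \<in> borel_measurable borel"
    and "\<forall>x y. bayes_score M \<eta> x y \<le> bayes_score M \<eta> x (pred fstar x)"
  shows "\<forall>f :: real ^ 'd \<Rightarrow> 'y \<Rightarrow> real.
           (\<forall>y. (\<lambda>x. f x y) \<in> borel_measurable borel) \<longrightarrow> GBA M f \<le> GBA M fstar"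
proof -
  define \<nu> where "\<nu> = distr M borel fst"
  define c where "c = 1 / (real CARD('a) * real CARD('y))"
  interpret P: prob_space M by fact
  have sp: "space M = UNIV"
    using sets_eq_imp_space_eq[OF assms(2)] by (simp add: space_pair_measure)
  have fstm: "fst \<in> borel_measurable M"
    unfolding measurable_cong_sets[OF assms(2) refl] by measurable
  interpret N: prob_space \<nu> unfolding \<nu>_def by (rule P.prob_space_distr[OF fstm])
  have snu: "sets \<nu> = sets borel" unfolding \<nu>_def by simp
  have bm: "g \<in> borel_measurable \<nu> \<longleftrightarrow> g \<in> borel_measurable borel" for g :: "_ \<Rightarrow> real"
    by (subst measurable_cong_sets[OF snu refl]) (rule refl)
  have eta_le: "\<eta> x y a \<le> 1" for x y a
  proof -
    have "(\<lambda>(y, a). \<eta> x y a) (y, a) \<le> (\<Sum>(y, a)\<in>UNIV. \<eta> x y a)"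
      by (rule member_le_sum) (use assms(5) in auto)
    then show ?thesis using assms(6) by simp
  qed
  have key: "integrable \<nu> (\<lambda>x. bayes_score M \<eta> x (pred f x)) \<and>
     GBA M f = c * integral\<^sup>L \<nu> (\<lambda>x. bayes_score M \<eta> x (pred f x))"
    if fm: "\<forall>y. (\<lambda>x. f x y) \<in> borel_measurable borel" for f :: "real ^ 'd \<Rightarrow> 'y \<Rightarrow> real"
  proof -
    define h where "h y0 a0 x = indicator {x. pred f x = y0} x * \<eta> x y0 a0 / group_prior M y0 a0" for y0 a0 x
    have Sm: "{x. pred f x = y0} \<in> sets borel" for y0
      using pred_meas[OF fm, of y0] by simp
    have hint: "integrable \<nu> (h y0 a0)" for y0 a0
    proof (rule N.integrable_const_bound[where B="1 / group_prior M y0 a0"])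
      have p: "group_prior M y0 a0 > 0" using assms(3) by auto
      show "AE x in \<nu>. norm (h y0 a0 x) \<le> 1 / group_prior M y0 a0"
        using p eta_le[of _ y0 a0] assms(5)
        by (auto simp: h_def indicator_def divide_right_mono)
      show "h y0 a0 \<in> borel_measurable \<nu>"
        unfolding bm h_def using Sm[of y0] assms(4)
        by (intro borel_measurable_divide borel_measurable_times) auto
    qed
    have cp: "cond_prob M {z \<in> space M. pred f (fst z) = fst (snd z)}
                    {z \<in> space M. snd z = (y0, a0)} = integral\<^sup>L \<nu> (h y0 a0)" for y0 a0
    proof -
      have "{z \<in> space M. pred f (fst z) = fst (snd z)} \<inter> {z \<in> space M. snd z = (y0, a0)}
           = {x. pred f x = y0} \<times> {(y0, a0)}" using sp by auto
      then have "measure M ({z \<in> space M. pred f (fst z) = fst (snd z)} \<inter> {z \<in> space M. snd z = (y0, a0)})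
          = (LINT x:{x. pred f x = y0}|\<nu>. \<eta> x y0 a0)"
        using assms(7) Sm[of y0] unfolding \<nu>_def by simp
      also have "\<dots> = integral\<^sup>L \<nu> (\<lambda>x. indicator {x. pred f x = y0} x * \<eta> x y0 a0)"
        by (simp add: set_lebesgue_integral_def)
      finally show ?thesis
        unfolding cond_prob_def h_def group_prior_def[symmetric]
        by (simp add: integral_divide_zero group_prior_def)
    qed
    have sumeq: "(\<Sum>(y0, a0)\<in>(UNIV::('y\<times>'a) set). h y0 a0 x) = bayes_score M \<eta> x (pred f x)" for x
    proof -
      have "(\<Sum>(y0, a0)\<in>(UNIV::('y\<times>'a) set). h y0 a0 x) = (\<Sum>y0\<in>UNIV. \<Sum>a0\<in>UNIV. h y0 a0 x)"
        by (simp add: sum.cartesian_product UNIV_Times_UNIV[symmetric] del: UNIV_Times_UNIV)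
      also have "\<dots> = (\<Sum>y0\<in>UNIV. indicator {x. pred f x = y0} x * bayes_score M \<eta> x y0)"
        by (simp add: h_def bayes_score_def sum_distrib_left)
      also have "\<dots> = bayes_score M \<eta> x (pred f x)"
        by (simp add: indicator_def)
      finally show ?thesis .
    qed
    have "integrable \<nu> (\<lambda>x. \<Sum>(y0, a0)\<in>(UNIV::('y\<times>'a) set). h y0 a0 x)"
      using hint by (auto intro!: integrable_sum simp: case_prod_beta)
    then have i1: "integrable \<nu> (\<lambda>x. bayes_score M \<eta> x (pred f x))"
      using sumeq by simp
    have "GBA M f = c * (\<Sum>(y0, a0)\<in>(UNIV::('y\<times>'a) set). integral\<^sup>L \<nu> (h y0 a0))"
      unfolding GBA_def c_def using cp by simp
    also have "(\<Sum>(y0, a0)\<in>(UNIV::('y\<times>'a) set). integral\<^sup>L \<nu> (h y0 a0))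
        = integral\<^sup>L \<nu> (\<lambda>x. \<Sum>(y0, a0)\<in>(UNIV::('y\<times>'a) set). h y0 a0 x)"
      unfolding case_prod_beta using hint by simp
    also have "\<dots> = integral\<^sup>L \<nu> (\<lambda>x. bayes_score M \<eta> x (pred f x))"
      using sumeq by simp
    finally show ?thesis using i1 by simp
  qed
  show ?thesis
  proof (intro allI impI)
    fix f :: "real ^ 'd \<Rightarrow> 'y \<Rightarrow> real"
    assume "\<forall>y. (\<lambda>x. f x y) \<in> borel_measurable borel"
    note k1 = key[OF this] and k2 = key[OF assms(8)]
    have "integral\<^sup>L \<nu> (\<lambda>x. bayes_score M \<eta> x (pred f x)) \<le> integral\<^sup>L \<nu> (\<lambda>x. bayes_score M \<eta> x (pred fstar x))"
      using k1 k2 assms(9) by (intro integral_mono) auto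
    moreover have "c \<ge> 0" unfolding c_def by simp
    ultimately show "GBA M f \<le> GBA M fstar" using k1 k2 by (simp add: mult_left_mono)
  qed
qed
end
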